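(* The following identities hold: \begin{align*} \sum_{k=0}^\infty\frac{(22k^2+17k-2)\binom{4k}k}{(k+1)16^k}&=17, \\\sum_{k=0}^\infty\frac{(11k^2+8k+1)\binom{4k}k}{(3k+1)(3k+2)16^k}&=1, \\\sum_{k=0}^\infty\frac{(22k^2-18k+3)\binom{4k}k}{(2k-1)(4k-1)(4k-3)16^k}&=-\frac13. \end{align*} *)

theory Defs
  imports Complex_Main
begin

end

theory Submission
  imports Defs
begin


lemma binom_half_bound:
  assumes "k \<le> n"
  shows "real (n choose k) * (1/2)^k \<le> (3/2)^n"
proof -
  have "(3/2::real)^n = (1/2 + 1)^n" by simp
  also have "\<dots> = (\<Sum>j\<le>n. real (n choose j) * (1/2)^j * 1^(n-j))"
    by (rule binomial_ring)
  finally have eq: "(3/2::real)^n = (\<Sum>j\<le>n. real (n choose j) * (1/2)^j)" by simp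
  have "real (n choose k) * (1/2)^k \<le> (\<Sum>j\<le>n. real (n choose j) * (1/2)^j)"
    by (rule member_le_sum[where f="\<lambda>j. real (n choose j) * (1/2)^j"]) (use assms in auto)
  then show ?thesis using eq by simp
qed

lemma binom_bound2:
  assumes "k \<le> n"
  shows "real (n choose k) \<le> (3/2)^n * 2^k"
proof -
  have h: "real (n choose k) * (1/2)^k \<le> (3/2)^n" by (rule binom_half_bound[OF assms])
  have "real (n choose k) * (1/2)^k * 2^k \<le> (3/2)^n * 2^k"
    by (rule mult_right_mono[OF h]) simp
  moreover have "(1/2::real)^k * 2^k = 1"
  proof -
    have "(1/2::real)^k * 2^k = (1/2 * 2)^k" by (rule power_mult_distrib[symmetric])
    then show ?thesis by simp
  qed
  ultimately show ?thesis by (simp add: mult.assoc)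
qed

lemma pow_aux: "(3/2::real)^(4*k+r) * 2^k = (3/2)^r * (81/8)^k"
proof -
  have a1: "(3/2::real)^(4*k+r) = ((3/2)^4)^k * (3/2)^r"
    by (simp only: power_add power_mult)
  have a2: "((3/2::real)^4) = 81/16" by (simp add: power_divide)
  have a3: "(81/16::real)^k * 2^k = (81/16 * 2)^k" by (rule power_mult_distrib[symmetric])
  have a4: "(81/16 * 2::real) = 81/8" by simp
  show ?thesis unfolding a1 a2 using a3 a4 by (simp add: ac_simps)
qed

definition a :: "nat \<Rightarrow> nat \<Rightarrow> real" where
  "a r k = real r * fact (4*k+r-1) / (fact k * fact (3*k+r))"

lemma a_le_binom:
  assumes "r \<ge> 1"
  shows "0 \<le> a r k \<and> a r k \<le> real ((4*k+r) choose k)"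
proof -
  have b: "real ((4*k+r) choose k) = fact (4*k+r) / (fact k * fact (3*k+r))"
    by (subst binomial_fact) (auto simp: algebra_simps)
  have f: "(fact (4*k+r)::real) = real (4*k+r) * fact (4*k+r-1)"
    using assms by (subst fact_reduce) auto
  have "real r * fact (4*k+r-1) \<le> (fact (4*k+r)::real)"
    unfolding f by (intro mult_right_mono) auto
  then show ?thesis unfolding a_def b
    by (auto intro!: divide_right_mono)
qed

lemma a_term_bound:
  assumes "r \<ge> 1"
  shows "0 \<le> a r k / 16^k \<and> a r k / 16^k \<le> (3/2)^r * (81/128)^k"
proof -
  have "real ((4*k+r) choose k) \<le> (3/2)^(4*k+r) * 2^k"
    by (rule binom_bound2) auto
  also have "\<dots> = (3/2)^r * (81/8)^k"
    by (rule pow_aux)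
  finally have "a r k \<le> (3/2)^r * (81/8)^k" using a_le_binom[OF assms, of k] by linarith
  then have "a r k / 16^k \<le> (3/2)^r * (81/8)^k / 16^k" by (simp add: divide_right_mono)
  also have "\<dots> = (3/2)^r * (81/128)^k"
  proof -
    have q: "(81/8::real)^k / 16^k = (81/128)^k" by (simp add: power_divide[symmetric])
    show ?thesis by (simp only: times_divide_eq_right[symmetric] q)
  qed
  finally show ?thesis using a_le_binom[OF assms, of k] by simp
qed

definition s :: "nat \<Rightarrow> real" where "s r = (\<Sum>k. a r k / 16^k)"

lemma a_summable:
  assumes r: "r \<ge> 1" shows "summable (\<lambda>k. a r k / 16^k)"
proof (rule summable_comparison_test'[where g="\<lambda>k. (3/2)^r * (81/128)^k" and N=0])
  show "summable (\<lambda>k. (3/2)^r * (81/128::real)^k)"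
    by (intro summable_mult summable_geometric) auto
  fix n :: nat
  show "norm (a r n / 16^n) \<le> (3/2)^r * (81/128)^n"
    using a_term_bound[OF r, of n] a_le_binom[OF r, of n] by simp
qed

lemma s_bound: "r \<ge> 1 \<Longrightarrow> 0 \<le> s r \<and> s r \<le> (3/2)^r * (128/47)"
proof -
  assume r: "r \<ge> 1"
  have g: "(\<lambda>k. (3/2)^r * (81/128::real)^k) sums ((3/2)^r * (1 / (1 - 81/128)))"
    by (intro sums_mult geometric_sums) auto
  have "s r \<le> (3/2)^r * (1 / (1 - 81/128))"
    unfolding s_def using a_summable[OF r] g a_term_bound[OF r]
    by (intro sums_le[OF _ summable_sums g]) auto
  moreover have "0 \<le> s r" unfolding s_def using a_summable[OF r] a_term_bound[OF r]
    by (intro suminf_nonneg) auto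
  ultimately show ?thesis by simp
qed

lemma a_rec:
  assumes "r \<ge> 1"
  shows "a (r+1) (Suc m) - a r (Suc m) = a (r+4) m"
proof -
  define x where "x = real m"
  define y where "y = real r"
  have e1: "4 * Suc m + (r+1) - 1 = 4*m+r+4" "3 * Suc m + (r+1) = 3*m+r+4"
    "4 * Suc m + r - 1 = 4*m+r+3" "3*Suc m + r = 3*m+r+3" "4*m+(r+4)-1 = 4*m+r+3"
    "3*m+(r+4) = 3*m+r+4" using assms by auto
  have f1: "(fact (4*m+r+4)::real) = (4*x+y+4) * fact (4*m+r+3)"
    by (simp add: x_def y_def fact_Suc numeral_eq_Suc add.commute add.left_commute)
  have f2: "(fact (3*m+r+4)::real) = (3*x+y+4) * fact (3*m+r+3)"
    by (simp add: x_def y_def fact_Suc numeral_eq_Suc add.commute add.left_commute)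
  have f3: "(fact (Suc m)::real) = (x+1) * fact m" by (simp add: x_def fact_Suc)
  have key: "\<And>x y A B C D1 D2::real. D1 = 3*x+y+4 \<Longrightarrow> D2 = x+1 \<Longrightarrow> D1 > 0 \<Longrightarrow> D2 > 0 \<Longrightarrow> A > 0 \<Longrightarrow> B > 0 \<Longrightarrow> C > 0 \<Longrightarrow>
     (y+1) * ((4*x+y+4) * A) / (D2 * C * (D1 * B)) - y * A / (D2 * C * B)
     = (y+4) * A / (C * (D1 * B))"
  proof -
    fix x y A B C D1 D2 :: real
    assume h: "D1 = 3*x+y+4" "D2 = x+1" "D1 > 0" "D2 > 0" "A > 0" "B > 0" "C > 0"
    have e: "(y+1)*(4*x+y+4) - y*D1 = (y+4)*D2" using h by (simp add: algebra_simps)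
    have "(y+1) * ((4*x+y+4) * A) / (D2 * C * (D1 * B)) - y * A / (D2 * C * B)
        = A/(C*B*D1*D2) * ((y+1)*(4*x+y+4) - y*D1)" using h(3-7) by (simp add: field_simps)
    also have "\<dots> = A/(C*B*D1*D2) * ((y+4)*D2)" by (simp only: e)
    also have "\<dots> = (y+4) * A / (C * (D1 * B))" using h(3-7) by (simp add: field_simps)
    finally show "(y+1) * ((4*x+y+4) * A) / (D2 * C * (D1 * B)) - y * A / (D2 * C * B)
     = (y+4) * A / (C * (D1 * B))" .
  qed
  have "a (r+1) (Suc m) - a r (Suc m) = (y+1) * ((4*x+y+4) * fact (4*m+r+3)) / ((x+1) * fact m * ((3*x+y+4) * fact (3*m+r+3))) - y * fact (4*m+r+3) / ((x+1) * fact m * fact (3*m+r+3))"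
    unfolding a_def e1 f1 f2 f3 by (simp add: x_def y_def)
  also have "\<dots> = (y+4) * fact (4*m+r+3) / (fact m * ((3*x+y+4) * fact (3*m+r+3)))"
    by (rule key[OF refl refl]) (auto simp: x_def y_def)
  also have "\<dots> = a (r+4) m" unfolding a_def e1 f2 by (simp add: x_def y_def)
  finally show ?thesis .
qed


lemma a_0: assumes "r \<ge> 1" shows "a r 0 = 1"
proof -
  have "(fact r::real) = real r * fact (r-1)" by (rule fact_reduce) (use assms in simp)
  then show ?thesis unfolding a_def using assms by simp
qed

lemma a1_Suc: "a 1 (Suc m) = a 4 m"
proof -
  have f1: "(fact (4*m+4)::real) = (4*real m+4) * fact (4*m+3)"
    by (simp add: fact_Suc numeral_eq_Suc add.commute add.left_commute)
  have f3: "(fact (Suc m)::real) = (real m+1) * fact m" by (simp add: fact_Suc)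
  have e: "4 * Suc m + 1 - 1 = 4*m+4" "3 * Suc m + 1 = 3*m+4" "4*m+4-1 = 4*m+3" by auto
  have "a 1 (Suc m) = (4*real m+4) * fact (4*m+3) / ((real m+1) * fact m * fact (3*m+4))"
    unfolding a_def e f1 f3 by simp
  also have "\<dots> = (4*(real m+1)) * fact (4*m+3) / ((real m+1) * (fact m * fact (3*m+4)))"
    by (simp add: algebra_simps)
  also have "\<dots> = 4 * fact (4*m+3) / (fact m * fact (3*m+4))"
  proof -
    have g: "\<And>D X Y::real. D > 0 \<Longrightarrow> 4*D*X/(D*Y) = 4*X/Y" by simp
    show ?thesis by (rule g) simp
  qed
  also have "\<dots> = a 4 m" unfolding a_def e by simp
  finally show ?thesis .
qed

lemma sums_shift_lemma:
  fixes g h :: "nat \<Rightarrow> real"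
  assumes "g 0 = c" "\<And>m. g (Suc m) = h m / 16" "h sums H"
  shows "g sums (H/16 + c)"
proof -
  have "(\<lambda>m. g (Suc m)) sums (H/16)" unfolding assms(2) by (intro sums_divide assms(3))
  then show ?thesis using sums_Suc_iff[of g "H/16"] assms(1) by simp
qed

lemma s_rec:
  assumes r: "r \<ge> 1"
  shows "s (r+1) - s r = s (r+4) / 16"
proof -
  have "(\<lambda>k. a (r+1) k / 16^k - a r k / 16^k) sums (s (r+1) - s r)"
    unfolding s_def using r by (intro sums_diff summable_sums a_summable) auto
  moreover have "(\<lambda>k. a (r+1) k / 16^k - a r k / 16^k) sums (s (r+4) / 16 + 0)"
  proof (rule sums_shift_lemma[where h="\<lambda>k. a (r+4) k / 16^k"])
    show "a (r+1) 0 / 16^0 - a r 0 / 16^0 = 0" using r by (simp add: a_0)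
    fix m
    show "a (r+1) (Suc m) / 16^Suc m - a r (Suc m) / 16^Suc m = a (r+4) m / 16^m / 16"
      using a_rec[OF r, of m] by (simp add: diff_divide_distrib[symmetric])
  next
    show "(\<lambda>k. a (r+4) k / 16^k) sums s (r+4)" unfolding s_def
      by (intro summable_sums a_summable) auto
  qed
  ultimately show ?thesis using sums_unique2 by fastforce
qed

lemma s_1: "s 1 - 1 = s 4 / 16"
proof -
  have "(\<lambda>k. a 1 k / 16^k) sums (s 4 / 16 + 1)"
  proof (rule sums_shift_lemma[where h="\<lambda>k. a 4 k / 16^k"])
    show "a 1 0 / 16^0 = 1" by (simp add: a_0)
    fix m
    show "a 1 (Suc m) / 16^Suc m = a 4 m / 16^m / 16"
      using a1_Suc[of m] by simp
  next
    show "(\<lambda>k. a 4 k / 16^k) sums s 4" unfolding s_def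
      by (intro summable_sums a_summable) auto
  qed
  moreover have "(\<lambda>k. a 1 k / 16^k) sums s 1" unfolding s_def
    by (intro summable_sums a_summable) auto
  ultimately show ?thesis using sums_unique2 by fastforce
qed

lemma s_relation: "4 * s 1 + 2 * s 2 + s 3 = 8"
proof -
  define v where "v r = s (r+3) + 2 * s (r+2) + 4 * s (r+1) - 8 * s r" for r
  have step: "v (Suc r) = 2 * v r" if "r \<ge> 1" for r
  proof -
    have e: "Suc r + 3 = r + 4" "Suc r + 2 = r+3" "Suc r + 1 = r+2" by auto
    show ?thesis using s_rec[OF that] unfolding v_def e by (simp add: algebra_simps)
  qed
  have pw: "v (Suc n) = 2^n * v 1" for n
    by (induction n) (auto simp: step)
  define c where "c = (128/47::real)"
  have sb: "\<bar>s (n+j)\<bar> \<le> c * (3/2)^(n+4)" if "j \<ge> 1" "j \<le> 4" for n j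
  proof -
    have "\<bar>s (n+j)\<bar> \<le> (3/2)^(n+j) * c" using s_bound[of "n+j"] that by (simp add: c_def)
    also have "(3/2::real)^(n+j) \<le> (3/2)^(n+4)" by (rule power_increasing) (use that in auto)
    then have "(3/2)^(n+j) * c \<le> c * (3/2::real)^(n+4)" by (simp add: c_def)
    finally show ?thesis .
  qed
  have vb: "\<bar>v (Suc n)\<bar> \<le> 15 * c * (3/2)^(n+4)" for n
  proof -
    have "\<bar>v (Suc n)\<bar> \<le> \<bar>s (n+4)\<bar> + 2 * \<bar>s (n+3)\<bar> + 4 * \<bar>s (n+2)\<bar> + 8 * \<bar>s (n+1)\<bar>"
    proof -
      have e: "Suc n + 3 = n + 4" "Suc n + 2 = n+3" "Suc n + 1 = n+2" by auto
      have g: "\<And>a b c d::real. \<bar>a + 2*b + 4*c - 8*d\<bar> \<le> \<bar>a\<bar> + 2*\<bar>b\<bar> + 4*\<bar>c\<bar> + 8*\<bar>d\<bar>"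
        by (auto simp: abs_if)
      show ?thesis unfolding v_def e using g[of "s(n+4)" "s(n+3)" "s(n+2)" "s(n+1)"] by simp
    qed
    also have "\<dots> \<le> 15 * c * (3/2)^(n+4)"
      using sb[of 4 n] sb[of 3 n] sb[of 2 n] sb[of 1 n] by simp
    finally show ?thesis .
  qed
  have v1: "v 1 = 0"
  proof (rule ccontr)
    assume nz: "v 1 \<noteq> 0"
    define K where "K = 15 * c * (81/16)"
    have Kp: "K > 0" by (simp add: K_def c_def)
    obtain n where n: "(3/4::real)^n < \<bar>v 1\<bar> / K"
      using real_arch_pow_inv[of "\<bar>v 1\<bar> / K" "3/4"] nz Kp by auto
    have "2^n * \<bar>v 1\<bar> \<le> 15 * c * (3/2)^(n+4)" using vb[of n] pw[of n] by (simp add: abs_mult)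
    also have "\<dots> = K * (3/2)^n" by (simp add: K_def power_add power_divide)
    finally have "2^n * \<bar>v 1\<bar> \<le> K * (3/2)^n" .
    then have "\<bar>v 1\<bar> \<le> K * ((3/2)^n / 2^n)" by (simp add: field_simps)
    also have "(3/2::real)^n / 2^n = (3/4)^n" by (simp add: power_divide[symmetric])
    finally have "\<bar>v 1\<bar> \<le> K * (3/4)^n" .
    moreover have "K * (3/4)^n < \<bar>v 1\<bar>" using n Kp by (simp add: field_simps)
    ultimately show False by simp
  qed
  have e: "(1::nat)+3 = 4" "(1::nat)+2 = 3" "(1::nat)+1 = 2" by simp_all
  have "v 1 = s 4 + 2*s 3 + 4*s 2 - 8*s 1" unfolding v_def by (simp only: e)
  then show ?thesis using s_1 v1 by linarith
qed



lemma id1g: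
  fixes x d a b c :: real
  assumes e: "d = x+1" "a = 3*x+1" "b = 3*x+2" "c = 3*x+3" and nz: "d \<noteq> 0" "a \<noteq> 0" "b \<noteq> 0" "c \<noteq> 0"
  shows "(22*x^2+17*x-2)/d = (27+54*x) - (27+54*(x+1))*((4*x+1)*(4*x+2)*(4*x+3)*(4*x+4)/(16*d*a*b*c))
     + (-5/4) * (4/a + 4*(4*x+1)/(a*b) + 3*(4*x+1)*(4*x+2)/(a*b*c))"
  using nz by (simp add: field_simps) (simp add: e algebra_simps power2_eq_square)

lemma id2g:
  fixes x d a b c :: real
  assumes e: "d = x+1" "a = 3*x+1" "b = 3*x+2" "c = 3*x+3" and nz: "d \<noteq> 0" "a \<noteq> 0" "b \<noteq> 0" "c \<noteq> 0"
  shows "(11*x^2+8*x+1)/(a*b) = 3 - 3*((4*x+1)*(4*x+2)*(4*x+3)*(4*x+4)/(16*d*a*b*c))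
     + (-1/4) * (4/a + 4*(4*x+1)/(a*b) + 3*(4*x+1)*(4*x+2)/(a*b*c))"
  using nz by (simp add: field_simps) (simp add: e algebra_simps power2_eq_square)

lemma id3g:
  fixes x d a b c p q r :: real
  assumes e: "d = x+1" "a = 3*x+1" "b = 3*x+2" "c = 3*x+3" "p = 2*x+1" "q = 4*x+3" "r = 4*x+1"
   and nz: "d \<noteq> 0" "a \<noteq> 0" "b \<noteq> 0" "c \<noteq> 0" "p \<noteq> 0" "q \<noteq> 0" "r \<noteq> 0"
  shows "(22*(x+1)^2-18*(x+1)+3)/(p*q*r) * ((4*x+1)*(4*x+2)*(4*x+3)*(4*x+4)/(16*d*a*b*c))
     = (4/a + 4*(4*x+1)/(a*b) + 3*(4*x+1)*(4*x+2)/(a*b*c)) / 12"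
  using nz by (simp add: field_simps) (simp add: e algebra_simps power2_eq_square)

definition T :: "nat \<Rightarrow> real" where "T k = real ((4*k) choose k) / 16^k"

lemma T_bound: "0 \<le> T k \<and> T k \<le> (81/128)^k"
proof -
  have "real ((4*k) choose k) \<le> (3/2)^(4*k) * 2^k"
    by (rule binom_bound2) auto
  also have "\<dots> = (81/8)^k"
    using pow_aux[of k 0] by simp
  finally have "real ((4*k) choose k) / 16^k \<le> (81/8)^k / 16^k" by (simp add: divide_right_mono)
  also have "\<dots> = (81/128)^k" by (simp add: power_divide[symmetric])
  finally show ?thesis unfolding T_def by simp
qed

lemma fS: "(fact (n+1)::real) = (real n + 1) * fact n"
  by (simp add: fact_Suc)

lemma T_facts:
  fixes k :: nat
  defines "x \<equiv> real k"
  shows "T k = fact (4*k) / (fact k * fact (3*k) * 16^k)"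
    and "T (Suc k) = fact (4*k) / (fact k * fact (3*k) * 16^k) *
           ((4*x+1)*(4*x+2)*(4*x+3)*(4*x+4)/(16*(x+1)*(3*x+1)*(3*x+2)*(3*x+3)))"
    and "(4 * a 1 k + 2 * a 2 k + a 3 k) / 16^k = fact (4*k) / (fact k * fact (3*k) * 16^k) *
           (4/(3*x+1) + 4*(4*x+1)/((3*x+1)*(3*x+2)) + 3*(4*x+1)*(4*x+2)/((3*x+1)*(3*x+2)*(3*x+3)))"
proof -
  have b0: "real ((4*k) choose k) = fact (4*k) / (fact k * fact (4*k-k))"
    by (rule binomial_fact) simp
  have e0: "4*k-k = 3*k" by simp
  have b: "real ((4*k) choose k) = fact (4*k) / (fact k * fact (3*k))"
    using b0 unfolding e0 .
  show t: "T k = fact (4*k) / (fact k * fact (3*k) * 16^k)" unfolding T_def b by simp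
  have b0': "real ((4*k+4) choose (k+1)) = fact (4*k+4) / (fact (k+1) * fact ((4*k+4)-(k+1)))"
    by (rule binomial_fact) simp
  have e0': "(4*k+4)-(k+1) = 3*k+3" "4 * Suc k = 4*k+4" "4 * (k+1) = 4*k+4" "Suc k = k+1" by simp_all
  have b': "real ((4*Suc k) choose Suc k) = fact (4*k+4) / (fact (k+1) * fact (3*k+3))"
    using b0' by (simp only: e0')
  have g1: "3*k+1 = 3*k+1" "3*k+2 = (3*k+1)+1" "3*k+3 = (3*k+2)+1"
     "4*k+2 = (4*k+1)+1" "4*k+3 = (4*k+2)+1" "4*k+4 = (4*k+3)+1" by simp_all
  have F31: "(fact (3*k+1)::real) = (3*x+1) * fact (3*k)" unfolding fS x_def by simp
  have F32: "(fact (3*k+2)::real) = (3*x+2) * ((3*x+1) * fact (3*k))"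
    unfolding g1(2) fS F31 by (simp add: x_def)
  have F33: "(fact (3*k+3)::real) = (3*x+3) * ((3*x+2) * ((3*x+1) * fact (3*k)))"
    unfolding g1(3) fS F32 by (simp add: x_def)
  have F41: "(fact (4*k+1)::real) = (4*x+1) * fact (4*k)" unfolding fS x_def by simp
  have F42: "(fact (4*k+2)::real) = (4*x+2) * ((4*x+1) * fact (4*k))"
    unfolding g1(4) fS F41 by (simp add: x_def)
  have F43: "(fact (4*k+3)::real) = (4*x+3) * ((4*x+2) * ((4*x+1) * fact (4*k)))"
    unfolding g1(5) fS F42 by (simp add: x_def)
  have F44: "(fact (4*k+4)::real) = (4*x+4) * ((4*x+3) * ((4*x+2) * ((4*x+1) * fact (4*k))))"
    unfolding g1(6) fS F43 by (simp add: x_def)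
  have Fk: "(fact (k+1)::real) = (x+1) * fact k" unfolding fS x_def by simp
  have pos: "(fact (4*k)::real) > 0" "(fact k::real) > 0" "(fact (3*k)::real) > 0" "(16::real)^k > 0" by simp_all
  have xp: "x \<ge> 0" by (simp add: x_def)
  show "T (Suc k) = fact (4*k) / (fact k * fact (3*k) * 16^k) *
           ((4*x+1)*(4*x+2)*(4*x+3)*(4*x+4)/(16*(x+1)*(3*x+1)*(3*x+2)*(3*x+3)))"
  proof -
    have gen: "\<And>A B C Q d a b c p1 p2 p3 p4::real. A > 0 \<Longrightarrow> B > 0 \<Longrightarrow> C > 0 \<Longrightarrow> Q > 0 \<Longrightarrow> d > 0 \<Longrightarrow> a > 0 \<Longrightarrow> b > 0 \<Longrightarrow> c > 0 \<Longrightarrow>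
       p4 * (p3 * (p2 * (p1 * A))) / (d * B * (c * (b * (a * C)))) / (16 * Q) = A / (B * C * Q) * (p1*p2*p3*p4 / (16*d*a*b*c))"
      by (simp add: field_simps)
    have "T (Suc k) = fact (4*k+4) / (fact (k+1) * fact (3*k+3)) / (16 * 16^k)"
      unfolding T_def b' by (simp only: power_Suc divide_divide_eq_left mult.commute)
    also have "\<dots> = (4*x+4) * ((4*x+3) * ((4*x+2) * ((4*x+1) * fact (4*k)))) / ((x+1) * fact k * ((3*x+3) * ((3*x+2) * ((3*x+1) * fact (3*k))))) / (16 * 16^k)"
      unfolding F44 Fk F33 by simp
    also have "\<dots> = fact (4*k) / (fact k * fact (3*k) * 16^k) * ((4*x+1)*(4*x+2)*(4*x+3)*(4*x+4)/(16*(x+1)*(3*x+1)*(3*x+2)*(3*x+3)))"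
      by (rule gen) (use pos xp in auto)
    finally show ?thesis .
  qed
  show "(4 * a 1 k + 2 * a 2 k + a 3 k) / 16^k = fact (4*k) / (fact k * fact (3*k) * 16^k) *
           (4/(3*x+1) + 4*(4*x+1)/((3*x+1)*(3*x+2)) + 3*(4*x+1)*(4*x+2)/((3*x+1)*(3*x+2)*(3*x+3)))"
  proof -
    have gen: "\<And>A B C Q a b c p1 p2::real. A > 0 \<Longrightarrow> B > 0 \<Longrightarrow> C > 0 \<Longrightarrow> Q > 0 \<Longrightarrow> a > 0 \<Longrightarrow> b > 0 \<Longrightarrow> c > 0 \<Longrightarrow>
       (4 * (1 * A / (B * (a * C))) + 2 * (2 * (p1 * A) / (B * (b * (a * C)))) + 3 * (p2 * (p1 * A)) / (B * (c * (b * (a * C))))) / Q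
       = A / (B * C * Q) * (4/a + 4*p1/(a*b) + 3*p1*p2/(a*b*c))"
      by (simp add: field_simps)
    have e: "4*k+1-1 = 4*k" "4*k+2-1 = 4*k+1" "4*k+3-1 = 4*k+2" by simp_all
    have "(4 * a 1 k + 2 * a 2 k + a 3 k) / 16^k = (4 * (1 * fact (4*k) / (fact k * ((3*x+1) * fact (3*k)))) + 2 * (2 * ((4*x+1) * fact (4*k)) / (fact k * ((3*x+2) * ((3*x+1) * fact (3*k))))) + 3 * ((4*x+2) * ((4*x+1) * fact (4*k))) / (fact k * ((3*x+3) * ((3*x+2) * ((3*x+1) * fact (3*k)))))) / 16^k"
      unfolding a_def e F41 F42 F31 F32 F33 by simp
    also have "\<dots> = fact (4*k) / (fact k * fact (3*k) * 16^k) *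
           (4/(3*x+1) + 4*(4*x+1)/((3*x+1)*(3*x+2)) + 3*(4*x+1)*(4*x+2)/((3*x+1)*(3*x+2)*(3*x+3)))"
      by (rule gen) (use pos xp in auto)
    finally show ?thesis .
  qed
qed


lemma W_sums: "(\<lambda>k. (4 * a 1 k + 2 * a 2 k + a 3 k) / 16^k) sums 8"
proof -
  have s1: "(\<lambda>k. a 1 k / 16^k) sums s 1" unfolding s_def by (rule summable_sums[OF a_summable]) simp
  have s2: "(\<lambda>k. a 2 k / 16^k) sums s 2" unfolding s_def by (rule summable_sums[OF a_summable]) simp
  have s3: "(\<lambda>k. a 3 k / 16^k) sums s 3" unfolding s_def by (rule summable_sums[OF a_summable]) simp
  have "(\<lambda>k. 4 * (a 1 k / 16^k) + 2 * (a 2 k / 16^k) + a 3 k / 16^k) sums (4 * s 1 + 2 * s 2 + s 3)"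
    by (rule sums_add[OF sums_add[OF sums_mult[OF s1] sums_mult[OF s2]] s3])
  then show ?thesis using s_relation by (simp add: add_divide_distrib)
qed

lemma poly_geom_zero: "(\<lambda>k. (real k + 1)^2 * (81/128)^k) \<longlonglongrightarrow> 0"
proof -
  have l1: "(\<lambda>k. real k * (9/10::real)^k) \<longlonglongrightarrow> 0" by (rule powser_times_n_limit_0) simp
  have l2: "(\<lambda>k. (9/10::real)^k) \<longlonglongrightarrow> 0" by (rule LIMSEQ_power_zero) simp
  have "(\<lambda>k. real k * (9/10::real)^k + (9/10)^k) \<longlonglongrightarrow> 0 + 0" by (rule tendsto_add[OF l1 l2])
  then have l0: "(\<lambda>k. (real k * (9/10::real)^k + (9/10)^k)^2) \<longlonglongrightarrow> (0 + 0)^2" by (rule tendsto_power)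
  have eq: "(real k * (9/10::real)^k + (9/10)^k)^2 = (real k + 1)^2 * (81/100::real)^k" for k
  proof -
    have p: "(9/10::real)^k * (9/10)^k = (81/100)^k" by (simp add: power_mult_distrib[symmetric])
    have "(real k * (9/10::real)^k + (9/10)^k)^2 = ((real k + 1) * (9/10::real)^k)^2" by (simp add: distrib_right)
    also have "\<dots> = (real k + 1)^2 * ((9/10::real)^k)^2" by (rule power_mult_distrib)
    also have "((9/10::real)^k)^2 = (81/100)^k" unfolding power2_eq_square p ..
    finally show ?thesis .
  qed
  have l3: "(\<lambda>k. (real k + 1)^2 * (81/100::real)^k) \<longlonglongrightarrow> 0" using l0 unfolding eq by simp
  show ?thesis
  proof (rule tendsto_sandwich[where f="\<lambda>_. 0" and h="\<lambda>k. (real k + 1)^2 * (81/100::real)^k"])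
    show "\<forall>\<^sub>F n in sequentially. 0 \<le> (real n + 1)^2 * (81/128::real)^n" by simp
    have "(real n + 1)^2 * (81/128::real)^n \<le> (real n + 1)^2 * (81/100)^n" for n
      by (rule mult_left_mono[OF power_mono]) auto
    then show "\<forall>\<^sub>F n in sequentially. (real n + 1)^2 * (81/128::real)^n \<le> (real n + 1)^2 * (81/100)^n"
      by simp
  qed (use l3 in auto)
qed

lemma g_zero:
  assumes "\<And>k. \<bar>R k\<bar> \<le> C * (real k + 1)^2"
  shows "(\<lambda>k. R k * T k) \<longlonglongrightarrow> 0"
proof (rule tendsto_sandwich[where f="\<lambda>k. - (C * ((real k + 1)^2 * (81/128)^k))" and h="\<lambda>k. C * ((real k + 1)^2 * (81/128)^k)"])
  have b: "\<bar>R k * T k\<bar> \<le> C * ((real k + 1)^2 * (81/128)^k)" for k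
  proof -
    have "\<bar>R k * T k\<bar> = \<bar>R k\<bar> * T k" using T_bound[of k] by (simp add: abs_mult)
    also have "\<dots> \<le> (C * (real k + 1)^2) * (81/128)^k"
      using T_bound[of k] assms[of k] by (intro mult_mono) auto
    finally show ?thesis by (simp add: mult.assoc)
  qed
  have b1: "- (C * ((real k + 1)^2 * (81/128)^k)) \<le> R k * T k" for k using b[of k] by linarith
  have b2: "R k * T k \<le> C * ((real k + 1)^2 * (81/128)^k)" for k using b[of k] by linarith
  show "\<forall>\<^sub>F n in sequentially. - (C * ((real n + 1)^2 * (81/128)^n)) \<le> R n * T n"
    using b1 by simp
  show "\<forall>\<^sub>F n in sequentially. R n * T n \<le> C * ((real n + 1)^2 * (81/128)^n)"
    using b2 by simp
  show "(\<lambda>k. - (C * ((real k + 1)^2 * (81/128::real)^k))) \<longlonglongrightarrow> 0"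
    using tendsto_minus[OF tendsto_mult_right_zero[OF poly_geom_zero, of C]] by simp
  show "(\<lambda>k. C * ((real k + 1)^2 * (81/128::real)^k)) \<longlonglongrightarrow> 0"
    using tendsto_mult_right_zero[OF poly_geom_zero, of C] by simp
qed

lemma tele:
  assumes "g \<longlonglongrightarrow> 0" "\<And>k. f k = g k - g (Suc k) + lam * ((4 * a 1 k + 2 * a 2 k + a 3 k) / 16^k)"
  shows "f sums (g 0 + 8 * lam)"
proof -
  have "(\<lambda>k. g k - g (Suc k) + lam * ((4 * a 1 k + 2 * a 2 k + a 3 k) / 16^k)) sums (g 0 - 0 + lam * 8)"
    by (rule sums_add[OF telescope_sums'[OF assms(1)] sums_mult[OF W_sums]])
  moreover have "f = (\<lambda>k. g k - g (Suc k) + lam * ((4 * a 1 k + 2 * a 2 k + a 3 k) / 16^k))"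
    using assms(2) by (rule ext)
  ultimately show ?thesis by (simp add: algebra_simps)
qed

theorem theorem1p3:
  shows "(\<lambda>k::nat. (22 * real k ^ 2 + 17 * real k - 2) * real ((4 * k) choose k)
            / ((real k + 1) * 16 ^ k)) sums 17 \<and>
         (\<lambda>k::nat. (11 * real k ^ 2 + 8 * real k + 1) * real ((4 * k) choose k)
            / ((3 * real k + 1) * (3 * real k + 2) * 16 ^ k)) sums 1 \<and>
         (\<lambda>k::nat. (22 * real k ^ 2 - 18 * real k + 3) * real ((4 * k) choose k)
            / ((2 * real k - 1) * (4 * real k - 1) * (4 * real k - 3) * 16 ^ k)) sums (- 1 / 3)"
proof (intro conjI)
  define W where "W k = (4 * a 1 k + 2 * a 2 k + a 3 k) / 16^k" for k
  define tau where "tau (x::real) = (4*x+1)*(4*x+2)*(4*x+3)*(4*x+4)/(16*(x+1)*(3*x+1)*(3*x+2)*(3*x+3))" for x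
  define om where "om (x::real) = 4/(3*x+1) + 4*(4*x+1)/((3*x+1)*(3*x+2)) + 3*(4*x+1)*(4*x+2)/((3*x+1)*(3*x+2)*(3*x+3))" for x
  have TS: "T (Suc k) = T k * tau (real k)" for k using T_facts(1,2)[of k] unfolding tau_def by simp
  have WT: "W k = T k * om (real k)" for k using T_facts(1,3)[of k] unfolding om_def W_def by simp
  have CT: "r * real ((4 * k) choose k) / (d * 16^k) = T k * (r / d)" for r d :: real and k
    unfolding T_def times_divide_times_eq by (simp add: ac_simps)
  show "(\<lambda>k::nat. (22 * real k ^ 2 + 17 * real k - 2) * real ((4 * k) choose k)
            / ((real k + 1) * 16 ^ k)) sums 17"
  proof -
    define g where "g k = (27 + 54 * real k) * T k" for k
    have "g \<longlonglongrightarrow> 0" unfolding g_def by (rule g_zero[where C=54]) (simp add: power2_eq_square algebra_simps)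
    moreover have "(22 * real k ^ 2 + 17 * real k - 2) * real ((4 * k) choose k) / ((real k + 1) * 16 ^ k)
        = g k - g (Suc k) + (-5/4) * ((4 * a 1 k + 2 * a 2 k + a 3 k) / 16^k)" for k
    proof -
      have h: "(22 * real k ^ 2 + 17 * real k - 2) / (real k + 1) = (27+54*real k) - (27+54*(real k+1))*tau (real k) + (-5/4) * om (real k)"
        unfolding tau_def om_def by (rule id1g) auto
      have "(22 * real k ^ 2 + 17 * real k - 2) * real ((4 * k) choose k) / ((real k + 1) * 16 ^ k)
          = T k * ((22 * real k ^ 2 + 17 * real k - 2) / (real k + 1))" by (rule CT)
      also have "\<dots> = T k * ((27+54*real k) - (27+54*(real k+1))*tau (real k) + (-5/4) * om (real k))"
        by (simp only: h)
      also have "\<dots> = g k - g (Suc k) + (-5/4) * W k" by (simp add: g_def TS WT algebra_simps)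
      finally show ?thesis unfolding W_def .
    qed
    ultimately have "(\<lambda>k::nat. (22 * real k ^ 2 + 17 * real k - 2) * real ((4 * k) choose k)
            / ((real k + 1) * 16 ^ k)) sums (g 0 + 8 * (-5/4))" by (rule tele)
    then show ?thesis by (simp add: g_def T_def)
  qed
  show "(\<lambda>k::nat. (11 * real k ^ 2 + 8 * real k + 1) * real ((4 * k) choose k)
            / ((3 * real k + 1) * (3 * real k + 2) * 16 ^ k)) sums 1"
  proof -
    define g where "g k = 3 * T k" for k
    have "g \<longlonglongrightarrow> 0" unfolding g_def by (rule g_zero[where C=3]) (simp add: power2_eq_square algebra_simps)
    moreover have "(11 * real k ^ 2 + 8 * real k + 1) * real ((4 * k) choose k) / ((3 * real k + 1) * (3 * real k + 2) * 16 ^ k)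
        = g k - g (Suc k) + (-1/4) * ((4 * a 1 k + 2 * a 2 k + a 3 k) / 16^k)" for k
    proof -
      have h: "(11 * real k ^ 2 + 8 * real k + 1) / ((3 * real k + 1) * (3 * real k + 2)) = 3 - 3*tau (real k) + (-1/4) * om (real k)"
        unfolding tau_def om_def by (rule id2g) auto
      have "(11 * real k ^ 2 + 8 * real k + 1) * real ((4 * k) choose k) / ((3 * real k + 1) * (3 * real k + 2) * 16 ^ k)
          = T k * ((11 * real k ^ 2 + 8 * real k + 1) / ((3 * real k + 1) * (3 * real k + 2)))" by (rule CT)
      also have "\<dots> = T k * (3 - 3*tau (real k) + (-1/4) * om (real k))"
        by (simp only: h)
      also have "\<dots> = g k - g (Suc k) + (-1/4) * W k" by (simp add: g_def TS WT algebra_simps)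
      finally show ?thesis unfolding W_def .
    qed
    ultimately have "(\<lambda>k::nat. (11 * real k ^ 2 + 8 * real k + 1) * real ((4 * k) choose k)
            / ((3 * real k + 1) * (3 * real k + 2) * 16 ^ k)) sums (g 0 + 8 * (-1/4))" by (rule tele)
    then show ?thesis by (simp add: g_def T_def)
  qed
  show "(\<lambda>k::nat. (22 * real k ^ 2 - 18 * real k + 3) * real ((4 * k) choose k)
            / ((2 * real k - 1) * (4 * real k - 1) * (4 * real k - 3) * 16 ^ k)) sums (- 1 / 3)"
  proof -
    define R where "R x = (22 * x ^ 2 - 18 * x + 3) / ((2 * x - 1) * (4 * x - 1) * (4 * x - 3))" for x :: real
    define g where "g k = R (real k) * T k" for k
    have gS: "g (Suc k) = W k / 12" for k
    proof -
      have h: "R (real k + 1) * tau (real k) = om (real k) / 12"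
        unfolding R_def tau_def om_def by (rule id3g) auto
      have "g (Suc k) = T k * (R (real k + 1) * tau (real k))" by (simp add: g_def TS algebra_simps)
      also have "\<dots> = T k * (om (real k) / 12)" by (simp only: h)
      also have "\<dots> = W k / 12" by (simp add: WT)
      finally show ?thesis .
    qed
    have "summable W" using W_sums unfolding W_def by (simp add: sums_iff)
    then have "W \<longlonglongrightarrow> 0" by (rule summable_LIMSEQ_zero)
    then have "(\<lambda>k. W k / 12) \<longlonglongrightarrow> 0 / 12" by (rule tendsto_divide) auto
    then have "(\<lambda>k. g (Suc k)) \<longlonglongrightarrow> 0" unfolding gS by simp
    then have "g \<longlonglongrightarrow> 0" by (rule LIMSEQ_imp_Suc)
    moreover have "(22 * real k ^ 2 - 18 * real k + 3) * real ((4 * k) choose k) / ((2 * real k - 1) * (4 * real k - 1) * (4 * real k - 3) * 16 ^ k)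
        = g k - g (Suc k) + (1/12) * ((4 * a 1 k + 2 * a 2 k + a 3 k) / 16^k)" for k
    proof -
      have "(22 * real k ^ 2 - 18 * real k + 3) * real ((4 * k) choose k) / ((2 * real k - 1) * (4 * real k - 1) * (4 * real k - 3) * 16 ^ k)
         = T k * ((22 * real k ^ 2 - 18 * real k + 3) / ((2 * real k - 1) * (4 * real k - 1) * (4 * real k - 3)))"
        by (rule CT)
      also have "\<dots> = g k" by (simp add: g_def R_def)
      also have "\<dots> = g k - g (Suc k) + (1/12) * W k" by (simp add: gS)
      finally show ?thesis unfolding W_def .
    qed
    ultimately have "(\<lambda>k::nat. (22 * real k ^ 2 - 18 * real k + 3) * real ((4 * k) choose k)
            / ((2 * real k - 1) * (4 * real k - 1) * (4 * real k - 3) * 16 ^ k)) sums (g 0 + 8 * (1/12))" by (rule tele)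
    then show ?thesis by (simp add: g_def R_def T_def)
  qed
qed

end
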